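(* Let $G$ be a reaction network with $s$ species and $m$ reactions, with stoichiometric matrix $\mathcal{N}\in\mathbb{Z}^{s\times m}$, reactant matrix $\mathcal{X}\in\mathbb{Z}^{s\times m}$, and dimension $r:=\operatorname{rank}(\mathcal{N})$. (i) If there is no $\alpha\in\mathbb{R}^m_{>0}$ with $\mathcal{N}\alpha=\mathbf 0$, then $G$ admits no positive steady state for any $\kappa\in\mathbb{R}^m_{>0}$. (ii) Suppose there exists $\alpha\in\mathbb{R}^m_{>0}$ with $\mathcal{N}\alpha=\mathbf 0$. Let $l^{(1)},\dots,l^{(t)}\in\mathbb{R}^m_{\ge0}$ be the extreme rays of the flux cone $\mathcal{F}(\mathcal{N})$, let $\lambda=(\lambda_1,\dots,\lambda_t)$ and $p=(p_1,\dots,p_s)$ be indeterminates, let $$J(p,\lambda):=\mathcal{N}\,\operatorname{diag}\Big(\sum_{i=1}^t\lambda_i l^{(i)}\Big)\,\mathcal{X}^\top\,\operatorname{diag}(p),$$ and let $$B(p,\lambda):=\sum_{I\subseteq\{1,\dots,s\},\ |I|=r}\det\big(J(p,\lambda)[I,I]\big)\in\mathbb{Q}[p,\lambda],$$ where $J[I,I]$ is the principal submatrix with rows and columns indexed by $I$. Then $G$ is degenerate if and only if $B(p,\lambda)$ is the zero polynomial; equivalently, $G$ admits at least one nondegenerate positive steady state (for some $\kappa\in\mathbb{R}^m_{>0}$) if and only if $B(p,\lambda)$ is not the zero polynomial.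
   Context: A reaction network $G$ has species $X_1,\dots,X_s$ and reactions $\mu_{1j}X_1+\dots+\mu_{sj}X_s\xrightarrow{\kappa_j}\nu_{1j}X_1+\dots+\nu_{sj}X_s$, $j=1,\dots,m$, with nonnegative integer coefficients, $(\mu_{1j},\dots,\mu_{sj})\neq(\nu_{1j},\dots,\nu_{sj})$, and rate constants $\kappa_j>0$. The stoichiometric matrix $\mathcal{N}$ has $(i,j)$-entry $\nu_{ij}-\mu_{ij}$; the reactant matrix $\mathcal{X}$ has $(i,j)$-entry $\mu_{ij}$; the stoichiometric subspace $S$ is the column space of $\mathcal{N}$. Under mass-action kinetics the dynamics are $\dot x=f(\kappa,x):=\mathcal{N}v(\kappa,x)$ with $v_j(\kappa,x)=\kappa_j\prod_{i=1}^s x_i^{\mu_{ij}}$. For $\kappa^*\in\mathbb{R}^m_{>0}$, a positive steady state is $x^*\in\mathbb{R}^s_{>0}$ with $f(\kappa^*,x^* )=\mathbf 0$; it is degenerate if the image of the Jacobian $\operatorname{Jac}_f(\kappa^*,x^* )$ restricted to $S$ is not all of $S$. The network $G$ is called degenerate if all of its positive steady states (over all $\kappa\in\mathbb{R}^m_{>0}$) are degenerate, and nondegenerate if it admits at least one nondegenerate positive steady state. The flux cone is $\mathcal{F}(\mathcal{N}):=\{\alpha\in\mathbb{R}^m_{\ge0}:\mathcal{N}\alpha=\mathbf 0\}$. *)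

theory Defs
  imports "HOL-Analysis.Analysis"
begin

text \<open>Species are indexed by a finite type 's, reactions by a finite type 'r.
  mu i j = reactant coefficient, nu i j = product coefficient.\<close>

definition stoich :: "('s::finite \<Rightarrow> 'r::finite \<Rightarrow> nat) \<Rightarrow> ('s \<Rightarrow> 'r \<Rightarrow> nat) \<Rightarrow> 's \<Rightarrow> 'r \<Rightarrow> real" where
  "stoich mu nu i j = real (nu i j) - real (mu i j)"

definition matvec :: "('s::finite \<Rightarrow> 'r::finite \<Rightarrow> real) \<Rightarrow> real^'r \<Rightarrow> real^'s" where
  "matvec M a = (\<chi> i. \<Sum>j\<in>UNIV. M i j * a $ j)"

definition stoich_subspace :: "('s::finite \<Rightarrow> 'r::finite \<Rightarrow> nat) \<Rightarrow> ('s \<Rightarrow> 'r \<Rightarrow> nat) \<Rightarrow> (real^'s) set" where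
  "stoich_subspace mu nu = range (matvec (stoich mu nu))"

definition rate :: "('s::finite \<Rightarrow> 'r::finite \<Rightarrow> nat) \<Rightarrow> real^'r \<Rightarrow> real^'s \<Rightarrow> real^'r" where
  "rate mu \<kappa> x = (\<chi> j. \<kappa> $ j * (\<Prod>i\<in>UNIV. (x $ i) ^ (mu i j)))"

definition mass_action :: "('s::finite \<Rightarrow> 'r::finite \<Rightarrow> nat) \<Rightarrow> ('s \<Rightarrow> 'r \<Rightarrow> nat) \<Rightarrow> real^'r \<Rightarrow> real^'s \<Rightarrow> real^'s" where
  "mass_action mu nu \<kappa> x = matvec (stoich mu nu) (rate mu \<kappa> x)"

definition positive_vec :: "real^'n \<Rightarrow> bool" where
  "positive_vec x \<longleftrightarrow> (\<forall>i. x $ i > 0)"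

definition positive_steady_state :: "('s::finite \<Rightarrow> 'r::finite \<Rightarrow> nat) \<Rightarrow> ('s \<Rightarrow> 'r \<Rightarrow> nat) \<Rightarrow> real^'r \<Rightarrow> real^'s \<Rightarrow> bool" where
  "positive_steady_state mu nu \<kappa> x \<longleftrightarrow> positive_vec x \<and> mass_action mu nu \<kappa> x = 0"

text \<open>The Jacobian of f(kappa, .) at x is its Frechet derivative (a linear map).
  A steady state is degenerate iff the Jacobian does not map S onto S.\<close>
definition degenerate_ss :: "('s::finite \<Rightarrow> 'r::finite \<Rightarrow> nat) \<Rightarrow> ('s \<Rightarrow> 'r \<Rightarrow> nat) \<Rightarrow> real^'r \<Rightarrow> real^'s \<Rightarrow> bool" where
  "degenerate_ss mu nu \<kappa> x \<longleftrightarrow>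
     frechet_derivative (mass_action mu nu \<kappa>) (at x) ` stoich_subspace mu nu \<noteq> stoich_subspace mu nu"

definition network_degenerate :: "('s::finite \<Rightarrow> 'r::finite \<Rightarrow> nat) \<Rightarrow> ('s \<Rightarrow> 'r \<Rightarrow> nat) \<Rightarrow> bool" where
  "network_degenerate mu nu \<longleftrightarrow>
     (\<forall>\<kappa> x. positive_vec \<kappa> \<and> positive_steady_state mu nu \<kappa> x \<longrightarrow> degenerate_ss mu nu \<kappa> x)"

definition network_nondegenerate :: "('s::finite \<Rightarrow> 'r::finite \<Rightarrow> nat) \<Rightarrow> ('s \<Rightarrow> 'r \<Rightarrow> nat) \<Rightarrow> bool" where
  "network_nondegenerate mu nu \<longleftrightarrow>
     (\<exists>\<kappa> x. positive_vec \<kappa> \<and> positive_steady_state mu nu \<kappa> x \<and> \<not> degenerate_ss mu nu \<kappa> x)"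

definition flux_cone :: "('s::finite \<Rightarrow> 'r::finite \<Rightarrow> real) \<Rightarrow> (real^'r) set" where
  "flux_cone N = {\<alpha>. (\<forall>j. \<alpha> $ j \<ge> 0) \<and> matvec N \<alpha> = 0}"

text \<open>l generates an extreme ray of the cone C.\<close>
definition extreme_ray :: "(real^'r) set \<Rightarrow> real^'r \<Rightarrow> bool" where
  "extreme_ray C l \<longleftrightarrow> l \<in> C \<and> l \<noteq> 0 \<and>
     (\<forall>a\<in>C. \<forall>b\<in>C. a + b = l \<longrightarrow> (\<exists>c\<ge>0. a = c *\<^sub>R l))"

text \<open>l 0, ..., l (t-1) is a list of representatives of the extreme rays of C:
  one generator for each extreme ray, no two on the same ray.\<close>
definition extreme_rays_list :: "(real^'r) set \<Rightarrow> nat \<Rightarrow> (nat \<Rightarrow> real^'r) \<Rightarrow> bool" where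
  "extreme_rays_list C t l \<longleftrightarrow>
     (\<forall>i<t. extreme_ray C (l i)) \<and>
     (\<forall>i<t. \<forall>k<t. i \<noteq> k \<longrightarrow> \<not> (\<exists>c>0. l i = c *\<^sub>R l k)) \<and>
     (\<forall>e. extreme_ray C e \<longrightarrow> (\<exists>i<t. \<exists>c>0. e = c *\<^sub>R l i))"

text \<open>J(p,lambda) = N diag(sum_i lambda_i l_i) X^T diag(p), entry (i,k).\<close>
definition Jmat :: "('s::finite \<Rightarrow> 'r::finite \<Rightarrow> nat) \<Rightarrow> ('s \<Rightarrow> 'r \<Rightarrow> nat) \<Rightarrow> nat \<Rightarrow> (nat \<Rightarrow> real^'r)
    \<Rightarrow> real^'s \<Rightarrow> (nat \<Rightarrow> real) \<Rightarrow> 's \<Rightarrow> 's \<Rightarrow> real" where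
  "Jmat mu nu t l p lam i k =
     (\<Sum>j\<in>UNIV. stoich mu nu i j * (\<Sum>a<t. lam a * l a $ j) * real (mu k j)) * p $ k"

text \<open>Determinant of the principal submatrix M[I,I] (Leibniz formula).\<close>
definition principal_minor :: "('s \<Rightarrow> 's \<Rightarrow> real) \<Rightarrow> 's set \<Rightarrow> real" where
  "principal_minor M I = (\<Sum>\<pi>\<in>{\<pi>. \<pi> permutes I}. of_int (sign \<pi>) * (\<Prod>i\<in>I. M i (\<pi> i)))"

definition Bpoly :: "('s::finite \<Rightarrow> 'r::finite \<Rightarrow> nat) \<Rightarrow> ('s \<Rightarrow> 'r \<Rightarrow> nat) \<Rightarrow> nat \<Rightarrow> (nat \<Rightarrow> real^'r)
    \<Rightarrow> real^'s \<Rightarrow> (nat \<Rightarrow> real) \<Rightarrow> real" where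
  "Bpoly mu nu t l p lam =
     (\<Sum>I\<in>{I. card I = dim (stoich_subspace mu nu)}. principal_minor (Jmat mu nu t l p lam) I)"

end

theory Submission
  imports Defs
begin

lemma permutes_minus_iff:
  "\<pi> permutes (UNIV - X) \<longleftrightarrow> \<pi> permutes UNIV \<and> (\<forall>i\<in>X. \<pi> i = i)"
  unfolding permutes_def by auto

lemma det_pm: "det (A::real^'n^'n) = principal_minor (\<lambda>i j. A$i$j) UNIV"
  unfolding det_def principal_minor_def by simp

lemma det_char_expand:
  fixes A :: "real^'n^'n"
  shows "det (z *\<^sub>R mat 1 + A) =
    (\<Sum>X\<in>Pow UNIV. z ^ card X * principal_minor (\<lambda>i j. A$i$j) (UNIV - X))"
proof -
  let ?P = "{\<pi>::'n\<Rightarrow>'n. \<pi> permutes UNIV}"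
  have fin: "finite ?P" by (simp add: finite_permutations)
  have 1: "det (z *\<^sub>R mat 1 + A) = (\<Sum>\<pi>\<in>?P. of_int (sign \<pi>) *
      (\<Prod>i\<in>UNIV. (if \<pi> i = i then z else 0) + A$i$(\<pi> i)))"
    unfolding det_def by (intro sum.cong refl) (auto simp: mat_def intro!: prod.cong)
  have 2: "(\<Prod>i\<in>UNIV. (if \<pi> i = i then z else 0) + A$i$(\<pi> i)) =
     (\<Sum>X\<in>Pow UNIV. (if \<forall>i\<in>X. \<pi> i = i then z ^ card X else 0) * (\<Prod>i\<in>UNIV - X. A$i$(\<pi> i)))" for \<pi>
  proof -
    have "(\<Prod>i\<in>UNIV. (if \<pi> i = i then z else 0) + A$i$(\<pi> i)) =
      (\<Sum>X\<in>Pow UNIV. (\<Prod>i\<in>X. (if \<pi> i = i then z else 0)) * (\<Prod>i\<in>UNIV - X. A$i$(\<pi> i)))"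
      by (rule prod_add) simp
    also have "\<dots> = (\<Sum>X\<in>Pow UNIV. (if \<forall>i\<in>X. \<pi> i = i then z ^ card X else 0) * (\<Prod>i\<in>UNIV - X. A$i$(\<pi> i)))"
    proof (intro sum.cong refl)
      fix X :: "'n set"
      show "(\<Prod>i\<in>X. (if \<pi> i = i then z else 0)) * (\<Prod>i\<in>UNIV - X. A$i$(\<pi> i)) =
        (if \<forall>i\<in>X. \<pi> i = i then z ^ card X else 0) * (\<Prod>i\<in>UNIV - X. A$i$(\<pi> i))"
      proof (cases "\<forall>i\<in>X. \<pi> i = i")
        case True
        then have "(\<Prod>i\<in>X. (if \<pi> i = i then z else 0)) = (\<Prod>i\<in>X. z)" by (intro prod.cong) auto
        then show ?thesis using True by simp
      next
        case False
        then obtain i where "i \<in> X" "\<pi> i \<noteq> i" by auto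
        then have "(\<Prod>i\<in>X. (if \<pi> i = i then z else 0)) = 0"
          by (intro prod_zero) (auto intro!: bexI[of _ i])
        then show ?thesis using False by simp
      qed
    qed
    finally show ?thesis .
  qed
  have "det (z *\<^sub>R mat 1 + A) = (\<Sum>\<pi>\<in>?P. \<Sum>X\<in>Pow UNIV. of_int (sign \<pi>) *
      ((if \<forall>i\<in>X. \<pi> i = i then z ^ card X else 0) * (\<Prod>i\<in>UNIV - X. A$i$(\<pi> i))))"
    unfolding 1 2 by (simp add: sum_distrib_left)
  also have "\<dots> = (\<Sum>X\<in>Pow UNIV. \<Sum>\<pi>\<in>?P. of_int (sign \<pi>) *
      ((if \<forall>i\<in>X. \<pi> i = i then z ^ card X else 0) * (\<Prod>i\<in>UNIV - X. A$i$(\<pi> i))))"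
    by (rule sum.swap)
  also have "\<dots> = (\<Sum>X\<in>Pow UNIV. z ^ card X * principal_minor (\<lambda>i j. A$i$j) (UNIV - X))"
  proof (intro sum.cong refl)
    fix X :: "'n set"
    have "(\<Sum>\<pi>\<in>?P. of_int (sign \<pi>) *
      ((if \<forall>i\<in>X. \<pi> i = i then z ^ card X else 0) * (\<Prod>i\<in>UNIV - X. A$i$(\<pi> i)))) =
      (\<Sum>\<pi>\<in>?P. if \<forall>i\<in>X. \<pi> i = i then z ^ card X * (of_int (sign \<pi>) * (\<Prod>i\<in>UNIV - X. A$i$(\<pi> i))) else 0)"
      by (intro sum.cong refl) auto
    also have "\<dots> = (\<Sum>\<pi>\<in>{\<pi>\<in>?P. \<forall>i\<in>X. \<pi> i = i}. z ^ card X * (of_int (sign \<pi>) * (\<Prod>i\<in>UNIV - X. A$i$(\<pi> i))))"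
      by (rule sum.inter_filter[symmetric]) (rule fin)
    also have "{\<pi>\<in>?P. \<forall>i\<in>X. \<pi> i = i} = {\<pi>. \<pi> permutes (UNIV - X)}"
      using permutes_minus_iff by blast
    finally show "(\<Sum>\<pi>\<in>?P. of_int (sign \<pi>) *
      ((if \<forall>i\<in>X. \<pi> i = i then z ^ card X else 0) * (\<Prod>i\<in>UNIV - X. A$i$(\<pi> i)))) =
      z ^ card X * principal_minor (\<lambda>i j. A$i$j) (UNIV - X)"
      unfolding principal_minor_def by (simp add: sum_distrib_left)
  qed
  finally show ?thesis .
qed

definition Esum :: "nat \<Rightarrow> ('n \<Rightarrow> 'n \<Rightarrow> real) \<Rightarrow> real" where
  "Esum k M = (\<Sum>I\<in>{I. card I = k}. principal_minor M I)"

definition ccoef :: "nat \<Rightarrow> ('n::finite \<Rightarrow> 'n \<Rightarrow> real) \<Rightarrow> real" where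
  "ccoef n M = (\<Sum>X\<in>{X. card X = n}. principal_minor M (UNIV - X))"

lemma det_char_poly:
  fixes A :: "real^'n^'n"
  shows "det (z *\<^sub>R mat 1 + A) = (\<Sum>n\<le>CARD('n). ccoef n (\<lambda>i j. A$i$j) * z ^ n)"
proof -
  have "det (z *\<^sub>R mat 1 + A) = (\<Sum>X\<in>Pow UNIV. z ^ card X * principal_minor (\<lambda>i j. A$i$j) (UNIV - X))"
    by (rule det_char_expand)
  also have "\<dots> = (\<Sum>n\<in>{..CARD('n)}. \<Sum>X\<in>{X\<in>Pow UNIV. card X = n}. z ^ card X * principal_minor (\<lambda>i j. A$i$j) (UNIV - X))"
    by (rule sum.group[symmetric]) (auto simp: card_mono)
  also have "\<dots> = (\<Sum>n\<le>CARD('n). ccoef n (\<lambda>i j. A$i$j) * z ^ n)"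
  proof (intro sum.cong refl)
    fix n assume "n \<in> {..CARD('n)}"
    have "(\<Sum>X\<in>{X\<in>Pow UNIV. card X = n}. z ^ card X * principal_minor (\<lambda>i j. A$i$j) (UNIV - X))
       = (\<Sum>X\<in>{X. card X = n}. principal_minor (\<lambda>i j. A$i$j) (UNIV - X) * z ^ n)"
      by (intro sum.cong) auto
    then show "(\<Sum>X\<in>{X\<in>Pow UNIV. card X = n}. z ^ card X * principal_minor (\<lambda>i j. A$i$j) (UNIV - X))
       = ccoef n (\<lambda>i j. A$i$j) * z ^ n"
      unfolding ccoef_def by (simp add: sum_distrib_right)
  qed
  finally show ?thesis .
qed

lemma Esum_ccoef:
  fixes M :: "'n::finite \<Rightarrow> 'n \<Rightarrow> real"
  assumes "r \<le> CARD('n)"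
  shows "Esum r M = ccoef (CARD('n) - r) M"
  unfolding Esum_def ccoef_def
proof (rule sum.reindex_bij_witness[of _ "\<lambda>X. UNIV - X" "\<lambda>I. UNIV - I"])
  fix X :: "'n set" assume "X \<in> {X. card X = CARD('n) - r}"
  then show "UNIV - X \<in> {I. card I = r}" using assms
    by (auto simp: card_Diff_subset)
next
  fix I :: "'n set" assume "I \<in> {I. card I = r}"
  then show "UNIV - I \<in> {X. card X = CARD('n) - r}"
    by (auto simp: card_Diff_subset)
qed (auto simp: Diff_Diff_Int)

lemma Esum_similar:
  fixes A K :: "real^'n^'n"
  assumes "\<And>z. det (z *\<^sub>R mat 1 + A) = det (z *\<^sub>R mat 1 + K)" and "r \<le> CARD('n)"
  shows "Esum r (\<lambda>i j. A$i$j) = Esum r (\<lambda>i j. K$i$j)"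
proof -
  have "\<forall>n\<le>CARD('n). ccoef n (\<lambda>i j. A$i$j) = ccoef n (\<lambda>i j. K$i$j)"
    using assms(1) unfolding det_char_poly by (subst polyfun_eq_coeffs[symmetric]) auto
  then show ?thesis using assms(2) by (simp add: Esum_ccoef)
qed

lemma det_similar:
  fixes A P Q :: "real^'n^'n"
  assumes "Q ** P = mat 1"
  shows "det (z *\<^sub>R mat 1 + Q ** A ** P) = det (z *\<^sub>R mat 1 + A)"
proof -
  have rd: "(B + C) ** P = B ** P + C ** P" for B C :: "real^'n^'n"
    by (simp add: matrix_matrix_mult_def vec_eq_iff sum.distrib algebra_simps)
  have "Q ** (z *\<^sub>R mat 1 + A) ** P = z *\<^sub>R (Q ** P) + Q ** A ** P"
    by (simp add: matrix_add_ldistrib rd matrix_scalar_ac scalar_matrix_assoc)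
  then have "z *\<^sub>R mat 1 + Q ** A ** P = Q ** (z *\<^sub>R mat 1 + A) ** P"
    using assms by simp
  then have "det (z *\<^sub>R mat 1 + Q ** A ** P) = det Q * det (z *\<^sub>R mat 1 + A) * det P"
    by (simp add: det_mul)
  also have "\<dots> = det (z *\<^sub>R mat 1 + A) * det (Q ** P)" by (simp add: det_mul)
  finally show ?thesis using assms by simp
qed

lemma det_ext:
  fixes M :: "'n::finite \<Rightarrow> 'n \<Rightarrow> real"
  shows "det (\<chi> i j. if i \<in> I \<and> j \<in> I then M i j else if i = j then 1 else 0) = principal_minor M I"
proof -
  let ?E = "(\<chi> i j. if i \<in> I \<and> j \<in> I then M i j else if i = j then 1 else 0) :: real^'n^'n"
  have "det ?E = (\<Sum>\<pi>\<in>{\<pi>. \<pi> permutes UNIV}. of_int (sign \<pi>) * (\<Prod>i\<in>UNIV. ?E$i$(\<pi> i)))"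
    unfolding det_def by simp
  also have "\<dots> = (\<Sum>\<pi>\<in>{\<pi>. \<pi> permutes UNIV}. if \<pi> permutes I then of_int (sign \<pi>) * (\<Prod>i\<in>I. M i (\<pi> i)) else 0)"
  proof (intro sum.cong refl)
    fix \<pi> assume "\<pi> \<in> {\<pi>. \<pi> permutes (UNIV::'n set)}"
    then have pU: "\<pi> permutes UNIV" by simp
    show "of_int (sign \<pi>) * (\<Prod>i\<in>UNIV. ?E$i$(\<pi> i)) =
      (if \<pi> permutes I then of_int (sign \<pi>) * (\<Prod>i\<in>I. M i (\<pi> i)) else 0)"
    proof (cases "\<pi> permutes I")
      case True
      have "(\<Prod>i\<in>UNIV. ?E$i$(\<pi> i)) = (\<Prod>i\<in>UNIV - I. ?E$i$(\<pi> i)) * (\<Prod>i\<in>I. ?E$i$(\<pi> i))"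
        by (rule prod.subset_diff) auto
      also have "(\<Prod>i\<in>UNIV - I. ?E$i$(\<pi> i)) = 1"
        using True by (intro prod.neutral) (auto simp: permutes_not_in)
      also have "(\<Prod>i\<in>I. ?E$i$(\<pi> i)) = (\<Prod>i\<in>I. M i (\<pi> i))"
        using True by (intro prod.cong) (auto simp: permutes_in_image)
      finally show ?thesis using True by simp
    next
      case False
      then obtain i where "i \<notin> I" "\<pi> i \<noteq> i"
        using pU unfolding permutes_def by blast
      then have "(\<Prod>i\<in>UNIV. ?E$i$(\<pi> i)) = 0"
        by (intro prod_zero) (auto intro!: bexI[of _ i])
      then show ?thesis using False by simp
    qed
  qed
  also have "\<dots> = (\<Sum>\<pi>\<in>{\<pi>\<in>{\<pi>. \<pi> permutes UNIV}. \<pi> permutes I}. of_int (sign \<pi>) * (\<Prod>i\<in>I. M i (\<pi> i)))"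
    by (rule sum.inter_filter[symmetric]) (simp add: finite_permutations)
  also have "{\<pi>\<in>{\<pi>. \<pi> permutes UNIV}. \<pi> permutes I} = {\<pi>. \<pi> permutes I}"
    by (auto intro: permutes_subset)
  finally show ?thesis unfolding principal_minor_def .
qed

lemma pm_zero_row:
  assumes "i \<in> I" "finite I" "\<And>j. M i j = 0"
  shows "principal_minor M I = 0"
  unfolding principal_minor_def
  using assms by (intro sum.neutral ballI) (auto intro!: prod_zero bexI[of _ i])

lemma main_LA:
  fixes M :: "real^'n^'n" and S :: "(real^'n) set"
  assumes S: "subspace S" and MS: "\<And>x. M *v x \<in> S"
  shows "(\<lambda>x. M *v x) ` S = S \<longleftrightarrow> Esum (dim S) (\<lambda>i j. M$i$j) \<noteq> 0"
proof -
  obtain B where B: "B \<subseteq> S" "independent B" "S \<subseteq> span B" "card B = dim S"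
    by (rule basis_exists)
  obtain C where C: "B \<subseteq> C" "independent C" "UNIV \<subseteq> span C"
    using maximal_independent_subset_extend[of B UNIV] B(2) by auto
  have finC: "finite C" using C(2) by (rule finiteI_independent)
  have cardC: "card C = CARD('n)"
    using basis_card_eq_dim[of C UNIV] C by simp
  obtain h where h: "bij_betw h (UNIV::'n set) C"
    using finite_same_card_bij[of "UNIV::'n set" C] finC cardC by auto
  have hinj: "inj h" and himg: "h ` UNIV = C" using h by (auto simp: bij_betw_def)
  define I0 where "I0 = {i. h i \<in> B}"
  have hI0: "h ` I0 = B" using C(1) himg unfolding I0_def by auto
  have cardI0: "card I0 = dim S"
    using B(4) hI0 card_image[of h I0] hinj by (metis inj_on_subset subset_UNIV)
  have SB: "span B = S" using span_subspace[OF B(1) B(3) S] .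
  define P :: "real^'n^'n" where "P = (\<chi> i j. h j $ i)"
  have Pv: "P *v c = (\<Sum>j\<in>UNIV. c$j *\<^sub>R h j)" for c
    unfolding P_def by (simp add: vec_eq_iff matrix_vector_mult_def sum_component mult.commute)
  have Pinj0: "c = 0" if "P *v c = 0" for c
  proof -
    let ?u = "\<lambda>v. c $ (inv h v)"
    have "(\<Sum>v\<in>C. ?u v *\<^sub>R v) = (\<Sum>j\<in>UNIV. ?u (h j) *\<^sub>R h j)"
      unfolding himg[symmetric] by (rule sum.reindex[unfolded comp_def]) (rule hinj)
    also have "\<dots> = P *v c" unfolding Pv using hinj by simp
    finally have "(\<Sum>v\<in>C. ?u v *\<^sub>R v) = 0" using that by simp
    then have "\<forall>v\<in>C. ?u v = 0" using C(2) dependent_finite[OF finC] by auto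
    then show "c = 0" using himg hinj by (auto simp: vec_eq_iff)
  qed
  obtain Q where QP: "Q ** P = mat 1"
    using matrix_left_invertible_ker[of P] Pinj0 by auto
  then have PQ: "P ** Q = mat 1" using matrix_left_right_inverse by auto
  have Pinj: "inj (\<lambda>c. P *v c)"
    by (metis QP inj_on_inverseI matrix_vector_mul_assoc matrix_vector_mul_lid)
  define S0 where "S0 = {c::real^'n. \<forall>i. i \<notin> I0 \<longrightarrow> c$i = 0}"
  have S_eq: "S = (\<lambda>c. P *v c) ` S0"
  proof
    show "S \<subseteq> (\<lambda>c. P *v c) ` S0"
    proof
      fix y assume "y \<in> S"
      then have "y \<in> span B" using SB by simp
      moreover have "finite B" using B(2) by (rule finiteI_independent)
      ultimately obtain u where u: "y = (\<Sum>v\<in>B. u v *\<^sub>R v)" using span_finite by blast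
      define c where "c = (\<chi> j. if j \<in> I0 then u (h j) else 0)"
      have "P *v c = (\<Sum>j\<in>UNIV. (if j \<in> I0 then u (h j) *\<^sub>R h j else 0))"
        unfolding Pv c_def by (intro sum.cong) auto
      also have "\<dots> = (\<Sum>j\<in>I0. u (h j) *\<^sub>R h j)"
        by (simp add: sum.If_cases)
      also have "\<dots> = (\<Sum>v\<in>B. u v *\<^sub>R v)"
        unfolding hI0[symmetric] using hinj
        by (subst sum.reindex) (auto intro: inj_on_subset)
      finally have "y = P *v c" using u by simp
      moreover have "c \<in> S0" unfolding S0_def c_def by simp
      ultimately show "y \<in> (\<lambda>c. P *v c) ` S0" by blast
    qed
  next
    show "(\<lambda>c. P *v c) ` S0 \<subseteq> S"
    proof
      fix y assume "y \<in> (\<lambda>c. P *v c) ` S0"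
      then obtain c where c: "c \<in> S0" "y = P *v c" by auto
      have "y = (\<Sum>j\<in>UNIV. (if j \<in> I0 then c$j *\<^sub>R h j else 0))"
        unfolding c(2) Pv using c(1) unfolding S0_def by (intro sum.cong) auto
      also have "\<dots> = (\<Sum>j\<in>I0. c$j *\<^sub>R h j)" by (simp add: sum.If_cases)
      also have "\<dots> \<in> span B"
        using hI0 by (intro span_sum span_mul span_base) auto
      finally show "y \<in> S" using SB by simp
    qed
  qed
  define K where "K = Q ** M ** P"
  have PK: "P ** K = M ** P"
    unfolding K_def by (simp add: matrix_mul_assoc PQ)
  have KS0: "K *v x \<in> S0" for x
  proof -
    have "M *v (P *v x) \<in> S" by (rule MS)
    then obtain c where c: "c \<in> S0" "M *v (P *v x) = P *v c" using S_eq by auto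
    have "K *v x = Q *v (M *v (P *v x))"
      unfolding K_def by (simp add: matrix_vector_mul_assoc matrix_mul_assoc)
    also have "\<dots> = c" using c(2) QP by (simp add: matrix_vector_mul_assoc)
    finally show ?thesis using c(1) by simp
  qed
  have Krow: "K$i$j = 0" if "i \<notin> I0" for i j
  proof -
    have "(K *v axis j 1)$i = 0" using KS0[of "axis j 1"] that unfolding S0_def by auto
    then show ?thesis by (simp add: matrix_vector_mult_basis column_def)
  qed
  have rle: "dim S \<le> CARD('n)" by (rule dim_subset_UNIV_cart)
  have E1: "Esum (dim S) (\<lambda>i j. M$i$j) = Esum (dim S) (\<lambda>i j. K$i$j)"
    by (rule Esum_similar[OF _ rle]) (simp add: K_def det_similar[OF QP])
  have E2: "Esum (dim S) (\<lambda>i j. K$i$j) = principal_minor (\<lambda>i j. K$i$j) I0"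
  proof -
    have "Esum (dim S) (\<lambda>i j. K$i$j) = principal_minor (\<lambda>i j. K$i$j) I0 +
       (\<Sum>I\<in>{I. card I = dim S} - {I0}. principal_minor (\<lambda>i j. K$i$j) I)"
      unfolding Esum_def using cardI0 by (subst sum.remove[of _ I0]) auto
    also have "(\<Sum>I\<in>{I. card I = dim S} - {I0}. principal_minor (\<lambda>i j. K$i$j) I) = 0"
    proof (intro sum.neutral ballI)
      fix I assume I: "I \<in> {I. card I = dim S} - {I0}"
      have "\<not> I \<subseteq> I0"
      proof
        assume "I \<subseteq> I0"
        then have "I = I0" using I cardI0 by (intro card_subset_eq) auto
        then show False using I by auto
      qed
      then obtain i where "i \<in> I" "i \<notin> I0" by auto
      then show "principal_minor (\<lambda>i j. K$i$j) I = 0"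
        by (intro pm_zero_row[of i]) (auto simp: Krow)
    qed
    finally show ?thesis by simp
  qed
  define E :: "real^'n^'n" where "E = (\<chi> i j. if i \<in> I0 \<and> j \<in> I0 then K$i$j else if i = j then 1 else 0)"
  have E3: "det E = principal_minor (\<lambda>i j. K$i$j) I0"
    unfolding E_def by (rule det_ext)
  have EK: "E *v c = K *v c" if "c \<in> S0" for c
  proof -
    have "(E *v c)$i = (K *v c)$i" for i
    proof (cases "i \<in> I0")
      case True
      then show ?thesis using that unfolding E_def S0_def matrix_vector_mult_def
        by (auto intro!: sum.cong)
    next
      case False
      have "(K *v c)$i = 0" using KS0[of c] False unfolding S0_def by auto
      moreover have "E$i$j * x = (if i = j then x else 0)" for j x using False by (simp add: E_def)
      then have "(E *v c)$i = c$i"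
        unfolding matrix_vector_mult_def by simp
      ultimately show ?thesis using False that unfolding S0_def by simp
    qed
    then show ?thesis by (simp add: vec_eq_iff)
  qed
  have ET: "E *v c = c" if "\<forall>i\<in>I0. c$i = 0" for c
  proof -
    have "(E *v c)$i = c$i" for i
    proof (cases "i \<in> I0")
      case True
      have "(E *v c)$i = (\<Sum>j\<in>UNIV. (if j \<in> I0 then K$i$j else if i = j then 1 else 0) * c$j)"
        unfolding E_def matrix_vector_mult_def vec_lambda_beta using True by (intro sum.cong refl) simp
      also have "\<dots> = 0"
        using True that by (intro sum.neutral ballI) auto
      finally show ?thesis using True that by simp
    next
      case False
      have "E$i$j * x = (if i = j then x else 0)" for j x using False by (simp add: E_def)
      then show ?thesis
        unfolding matrix_vector_mult_def by simp
    qed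
    then show ?thesis by (simp add: vec_eq_iff)
  qed
  have Eadd: "E *v (a + b) = E *v a + E *v b" for a b by (simp add: matrix_vector_right_distrib)
  have split: "c = (\<chi> i. if i \<in> I0 then c$i else 0) + (\<chi> i. if i \<in> I0 then 0 else c$i)" for c :: "real^'n"
    by (simp add: vec_eq_iff)
  have surjE: "surj (\<lambda>x. E *v x) \<longleftrightarrow> (\<lambda>x. K *v x) ` S0 = S0"
  proof
    assume su: "surj (\<lambda>x. E *v x)"
    show "(\<lambda>x. K *v x) ` S0 = S0"
    proof
      show "(\<lambda>x. K *v x) ` S0 \<subseteq> S0" using KS0 by auto
      show "S0 \<subseteq> (\<lambda>x. K *v x) ` S0"
      proof
        fix y assume y: "y \<in> S0"
        obtain x where x: "y = E *v x" using su by (metis surjD)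
        define x0 where "x0 = (\<chi> i. if i \<in> I0 then x$i else 0)"
        define x1 where "x1 = (\<chi> i. if i \<in> I0 then 0 else x$i)"
        have x0S: "x0 \<in> S0" unfolding x0_def S0_def by simp
        have xx: "x = x0 + x1" unfolding x0_def x1_def by (simp add: vec_eq_iff)
        have Ex1: "E *v x1 = x1" by (rule ET) (simp add: x1_def)
        have "y = E *v x0 + x1" unfolding x xx Eadd Ex1 ..
        then have "y = K *v x0 + x1" using EK[OF x0S] by simp
        moreover have "x1 = 0"
        proof -
          have "x1$i = 0" for i
          proof (cases "i \<in> I0")
            case True then show ?thesis unfolding x1_def by simp
          next
            case False
            have "y$i = (K *v x0)$i + x1$i" using \<open>y = K *v x0 + x1\<close> by simp
            then show ?thesis using y KS0[of x0] False unfolding S0_def by simp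
          qed
          then show ?thesis by (simp add: vec_eq_iff)
        qed
        ultimately show "y \<in> (\<lambda>x. K *v x) ` S0" using x0S by auto
      qed
    qed
  next
    assume KS: "(\<lambda>x. K *v x) ` S0 = S0"
    show "surj (\<lambda>x. E *v x)"
    proof -
      have "\<exists>x. y = E *v x" for y :: "real^'n"
      proof -
      define y0 where "y0 = (\<chi> i. if i \<in> I0 then y$i else 0)"
      define y1 where "y1 = (\<chi> i. if i \<in> I0 then 0 else y$i)"
      have "y0 \<in> S0" unfolding y0_def S0_def by simp
      then obtain x0 where x0: "x0 \<in> S0" "y0 = K *v x0" using KS by (metis imageE)
      have "E *v (x0 + y1) = K *v x0 + y1" using Eadd EK[OF x0(1)] ET[of y1] unfolding y1_def by simp
      also have "\<dots> = y" using x0(2) split[of y] unfolding y0_def y1_def by simp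
      finally show "\<exists>x. y = E *v x" by metis
      qed
      then show ?thesis by (metis surj_def)
    qed
  qed
  have detE: "det E \<noteq> 0 \<longleftrightarrow> surj (\<lambda>x. E *v x)"
    unfolding invertible_det_nz[symmetric] invertible_def
    using matrix_right_invertible_surjective[of E] matrix_left_right_inverse[of E] by metis
  have MK: "(\<lambda>x. M *v x) ` S = (\<lambda>c. P *v c) ` ((\<lambda>x. K *v x) ` S0)"
  proof -
    have "(\<lambda>x. M *v x) ` S = (\<lambda>c. M *v (P *v c)) ` S0" unfolding S_eq by (simp add: image_image)
    also have "\<dots> = (\<lambda>c. P *v (K *v c)) ` S0"
      using PK by (simp add: matrix_vector_mul_assoc)
    finally show ?thesis by (simp add: image_image)
  qed
  have "(\<lambda>x. M *v x) ` S = S \<longleftrightarrow> (\<lambda>x. K *v x) ` S0 = S0"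
    unfolding MK using S_eq inj_image_eq_iff[OF Pinj] by metis
  then show ?thesis using surjE detE E1 E2 E3 by simp
qed

definition supp :: "real^'r \<Rightarrow> 'r set" where
  "supp x = {j. x$j \<noteq> 0}"

lemma matvec_diff_scale:
  "matvec N (x - c *\<^sub>R y) = matvec N x - c *\<^sub>R matvec N y"
  by (simp add: matvec_def vec_eq_iff algebra_simps sum_subtractf sum_distrib_left)

lemma matvec_add: "matvec N (x + y) = matvec N x + matvec N y"
  by (simp add: matvec_def vec_eq_iff algebra_simps sum.distrib)

lemma matvec_scale: "matvec N (c *\<^sub>R y) = c *\<^sub>R matvec N y"
  by (simp add: matvec_def vec_eq_iff algebra_simps sum_distrib_left)

lemma matvec_sum: "finite A \<Longrightarrow> matvec N (\<Sum>a\<in>A. f a) = (\<Sum>a\<in>A. matvec N (f a))"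
  by (induction A rule: finite_induct) (simp_all add: matvec_def vec_eq_iff distrib_left sum.distrib)

lemma reduce:
  fixes N :: "'s::finite \<Rightarrow> 'r::finite \<Rightarrow> real"
  assumes b: "\<beta> \<in> flux_cone N" and d: "\<delta> \<in> flux_cone N" "\<delta> \<noteq> 0" and sub: "supp \<delta> \<subseteq> supp \<beta>"
  shows "\<exists>\<theta>>0. \<beta> - \<theta> *\<^sub>R \<delta> \<in> flux_cone N \<and> supp (\<beta> - \<theta> *\<^sub>R \<delta>) \<subset> supp \<beta>"
proof -
  define D where "D = supp \<delta>"
  have Dne: "D \<noteq> {}" using d(2) unfolding D_def supp_def by (auto simp: vec_eq_iff)
  have finD: "finite D" by simp
  define \<theta> where "\<theta> = Min ((\<lambda>j. \<beta>$j / \<delta>$j) ` D)"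
  have bpos: "\<beta>$j > 0" if "j \<in> D" for j
    using that sub b unfolding D_def supp_def flux_cone_def by (auto simp: order.order_iff_strict)
  have dpos: "\<delta>$j > 0" if "j \<in> D" for j
    using that d(1) unfolding D_def supp_def flux_cone_def by (auto simp: order.order_iff_strict)
  have "\<theta> \<in> (\<lambda>j. \<beta>$j / \<delta>$j) ` D" unfolding \<theta>_def using Dne finD by (intro Min_in) auto
  then obtain j0 where j0: "j0 \<in> D" "\<theta> = \<beta>$j0 / \<delta>$j0" by auto
  have thpos: "\<theta> > 0" using j0 bpos dpos by simp
  have thle: "\<theta> * \<delta>$j \<le> \<beta>$j" if "j \<in> D" for j
  proof -
    have "\<theta> \<le> \<beta>$j / \<delta>$j" unfolding \<theta>_def using that finD by (intro Min_le) auto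
    then show ?thesis using dpos[OF that] by (simp add: field_simps)
  qed
  have nonneg: "(\<beta> - \<theta> *\<^sub>R \<delta>)$j \<ge> 0" for j
  proof (cases "j \<in> D")
    case True then show ?thesis using thle by simp
  next
    case False
    then have "\<delta>$j = 0" unfolding D_def supp_def by simp
    then show ?thesis using b unfolding flux_cone_def by simp
  qed
  have ker: "matvec N (\<beta> - \<theta> *\<^sub>R \<delta>) = 0"
    using b d unfolding flux_cone_def by (simp add: matvec_diff_scale)
  have "supp (\<beta> - \<theta> *\<^sub>R \<delta>) \<subseteq> supp \<beta>"
  proof
    fix j assume "j \<in> supp (\<beta> - \<theta> *\<^sub>R \<delta>)"
    then show "j \<in> supp \<beta>" using sub unfolding supp_def by auto
  qed
  moreover have "j0 \<in> supp \<beta>" using sub j0 unfolding D_def by auto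
  moreover have "j0 \<notin> supp (\<beta> - \<theta> *\<^sub>R \<delta>)"
    using j0 dpos[OF j0(1)] unfolding supp_def by simp
  ultimately have "supp (\<beta> - \<theta> *\<^sub>R \<delta>) \<subset> supp \<beta>" by blast
  then show ?thesis using thpos nonneg ker unfolding flux_cone_def by auto
qed

lemma minimal_extreme:
  fixes N :: "'s::finite \<Rightarrow> 'r::finite \<Rightarrow> real"
  assumes b: "\<beta> \<in> flux_cone N" "\<beta> \<noteq> 0"
    and minl: "\<not> (\<exists>\<delta>\<in>flux_cone N. \<delta> \<noteq> 0 \<and> supp \<delta> \<subset> supp \<beta>)"
  shows "extreme_ray (flux_cone N) \<beta>"
  unfolding extreme_ray_def
proof (intro conjI ballI impI b)
  fix a b' assume a: "a \<in> flux_cone N" and b': "b' \<in> flux_cone N" and ab: "a + b' = \<beta>"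
  show "\<exists>c\<ge>0. a = c *\<^sub>R \<beta>"
  proof (cases "a = 0")
    case True then show ?thesis by (intro exI[of _ 0]) simp
  next
    case False
    have "supp a \<subseteq> supp \<beta>"
    proof
      fix j assume "j \<in> supp a"
      then have "a$j \<noteq> 0" unfolding supp_def by simp
      moreover have "a$j \<ge> 0" "b'$j \<ge> 0" using a b' unfolding flux_cone_def by auto
      moreover have "\<beta>$j = a$j + b'$j" using ab by auto
      ultimately have "\<beta>$j > 0" by linarith
      then show "j \<in> supp \<beta>" unfolding supp_def by simp
    qed
    from reduce[OF b(1) a False this] obtain \<theta> where th: "\<theta> > 0"
      "\<beta> - \<theta> *\<^sub>R a \<in> flux_cone N" "supp (\<beta> - \<theta> *\<^sub>R a) \<subset> supp \<beta>" by blast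
    then have "\<beta> - \<theta> *\<^sub>R a = 0" using minl by blast
    then have "a = (1/\<theta>) *\<^sub>R \<beta>" using th(1) by (simp add: vec_eq_iff field_simps)
    then show ?thesis using th(1) by (intro exI[of _ "1/\<theta>"]) simp
  qed
qed

lemma flux_decomp:
  fixes N :: "'s::finite \<Rightarrow> 'r::finite \<Rightarrow> real"
  assumes L: "extreme_rays_list (flux_cone N) t l"
  shows "\<beta> \<in> flux_cone N \<Longrightarrow> \<exists>c. (\<forall>a<t. c a \<ge> 0) \<and> \<beta> = (\<Sum>a<t. c a *\<^sub>R l a)"
proof (induction "card (supp \<beta>)" arbitrary: \<beta> rule: less_induct)
  case less
  show ?case
  proof (cases "\<beta> = 0")
    case True then show ?thesis by (intro exI[of _ "\<lambda>_. 0"]) simp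
  next
    case nz: False
    show ?thesis
    proof (cases "\<exists>\<delta>\<in>flux_cone N. \<delta> \<noteq> 0 \<and> supp \<delta> \<subset> supp \<beta>")
      case True
      then obtain \<delta> where d: "\<delta> \<in> flux_cone N" "\<delta> \<noteq> 0" "supp \<delta> \<subset> supp \<beta>" by blast
      have "card (supp \<delta>) < card (supp \<beta>)" using d(3) by (simp add: psubset_card_mono)
      then obtain c1 where c1: "\<forall>a<t. c1 a \<ge> 0" "\<delta> = (\<Sum>a<t. c1 a *\<^sub>R l a)"
        using less d(1) by blast
      obtain \<theta> where th: "\<theta> > 0" "\<beta> - \<theta> *\<^sub>R \<delta> \<in> flux_cone N" "supp (\<beta> - \<theta> *\<^sub>R \<delta>) \<subset> supp \<beta>"
        using reduce[OF less.prems d(1,2)] d(3) by auto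
      have "card (supp (\<beta> - \<theta> *\<^sub>R \<delta>)) < card (supp \<beta>)" using th(3) by (simp add: psubset_card_mono)
      then obtain c2 where c2: "\<forall>a<t. c2 a \<ge> 0" "\<beta> - \<theta> *\<^sub>R \<delta> = (\<Sum>a<t. c2 a *\<^sub>R l a)"
        using less th(2) by blast
      have "\<beta> = (\<beta> - \<theta> *\<^sub>R \<delta>) + \<theta> *\<^sub>R \<delta>" by simp
      also have "\<dots> = (\<Sum>a<t. (c2 a + \<theta> * c1 a) *\<^sub>R l a)"
        unfolding c2(2) by (simp add: c1(2) scaleR_sum_right sum.distrib scaleR_add_left)
      finally show ?thesis using c1(1) c2(1) th(1) by (intro exI[of _ "\<lambda>a. c2 a + \<theta> * c1 a"]) auto
    next
      case False
      then have "extreme_ray (flux_cone N) \<beta>" using minimal_extreme[OF less.prems nz] by blast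
      then obtain i d where id: "i < t" "d > 0" "\<beta> = d *\<^sub>R l i"
        using L unfolding extreme_rays_list_def by blast
      have "\<beta> = (\<Sum>a<t. (if a = i then d else 0) *\<^sub>R l a)"
        using id by (simp add: if_distrib[of "\<lambda>x. x *\<^sub>R _"] cong: if_cong)
      then show ?thesis using id by (intro exI[of _ "\<lambda>a. if a = i then d else 0"]) auto
    qed
  qed
qed

definition JJ :: "('s::finite \<Rightarrow> 'r::finite \<Rightarrow> nat) \<Rightarrow> ('s \<Rightarrow> 'r \<Rightarrow> nat) \<Rightarrow> real^'r \<Rightarrow> real^'s \<Rightarrow> 's \<Rightarrow> 's \<Rightarrow> real" where
  "JJ mu nu \<alpha> p i k = (\<Sum>j\<in>UNIV. stoich mu nu i j * \<alpha>$j * real (mu k j)) * p$k"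

lemma vec_nth_has_derivative: "((\<lambda>x. x $ l) has_derivative (\<lambda>x. x $ l)) F"
  by (rule bounded_linear.has_derivative[OF bounded_linear_vec_nth has_derivative_ident])

lemma mass_action_eq:
  "mass_action mu nu \<kappa> = (\<lambda>y. \<Sum>j\<in>UNIV. (\<kappa>$j * (\<Prod>l\<in>UNIV. (y$l)^(mu l j))) *\<^sub>R (\<chi> i. stoich mu nu i j))"
  by (auto simp: fun_eq_iff vec_eq_iff mass_action_def matvec_def rate_def sum_component mult.commute)

lemma key_prod:
  fixes x :: "real^'s::finite"
  assumes "x$l > 0"
  shows "of_nat m * (x$l)^(m - 1) * (\<Prod>l'\<in>UNIV-{l}. f l') = of_nat m * ((x$l)^m * (\<Prod>l'\<in>UNIV-{l}. f l')) / x$l"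
proof (cases m)
  case 0 then show ?thesis by simp
next
  case (Suc n)
  then show ?thesis using assms by (simp add: field_simps)
qed

lemma mass_action_has_derivative:
  fixes mu nu :: "'s::finite \<Rightarrow> 'r::finite \<Rightarrow> nat"
  assumes xpos: "\<And>k. x$k > 0"
  shows "(mass_action mu nu \<kappa> has_derivative
     (\<lambda>h. matvec (JJ mu nu (rate mu \<kappa> x) (\<chi> k. 1 / x$k)) h)) (at x)"
proof -
  have d: "(mass_action mu nu \<kappa> has_derivative
    (\<lambda>h. \<Sum>j\<in>UNIV. (\<kappa>$j * (\<Sum>l\<in>UNIV. of_nat (mu l j) * h$l * (x$l)^(mu l j - 1) *
        (\<Prod>l'\<in>UNIV-{l}. (x$l')^(mu l' j)))) *\<^sub>R (\<chi> i. stoich mu nu i j))) (at x)"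
    unfolding mass_action_eq
    by (intro has_derivative_sum has_derivative_scaleR_left has_derivative_mult_right
        has_derivative_prod has_derivative_power vec_nth_has_derivative)
  show ?thesis
  proof (rule has_derivative_eq_rhs[OF d], rule ext)
    fix h :: "real^'s"
    let ?P = "\<lambda>j. \<Prod>l\<in>UNIV. (x$l)^(mu l j)"
    have pr: "(x$l)^(mu l j) * (\<Prod>l'\<in>UNIV-{l}. (x$l')^(mu l' j)) = ?P j" for l j
      by (simp add: prod.remove[of UNIV l])
    have inner: "(\<Sum>l\<in>UNIV. of_nat (mu l j) * h$l * (x$l)^(mu l j - 1) *
        (\<Prod>l'\<in>UNIV-{l}. (x$l')^(mu l' j))) = (\<Sum>l\<in>UNIV. of_nat (mu l j) * h$l * ?P j / x$l)" for j
    proof (intro sum.cong refl)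
      fix l
      have "of_nat (mu l j) * (x$l)^(mu l j - 1) * (\<Prod>l'\<in>UNIV-{l}. (x$l')^(mu l' j)) =
         of_nat (mu l j) * ?P j / x$l"
        using key_prod[OF xpos[of l], of "mu l j"] pr[of l j] by simp
      then show "of_nat (mu l j) * h$l * (x$l)^(mu l j - 1) * (\<Prod>l'\<in>UNIV-{l}. (x$l')^(mu l' j)) =
         of_nat (mu l j) * h$l * ?P j / x$l"
        by (simp add: field_simps)
    qed
    show "(\<Sum>j\<in>UNIV. (\<kappa>$j * (\<Sum>l\<in>UNIV. of_nat (mu l j) * h$l * (x$l)^(mu l j - 1) *
        (\<Prod>l'\<in>UNIV-{l}. (x$l')^(mu l' j)))) *\<^sub>R (\<chi> i. stoich mu nu i j)) =
       matvec (JJ mu nu (rate mu \<kappa> x) (\<chi> k. 1 / x$k)) h"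
      unfolding inner
    proof (rule iffD2[OF vec_eq_iff], rule allI)
      fix i
      have "(\<Sum>j\<in>UNIV. (\<kappa>$j * (\<Sum>l\<in>UNIV. of_nat (mu l j) * h$l * ?P j / x$l)) *\<^sub>R (\<chi> i. stoich mu nu i j)) $ i
         = (\<Sum>j\<in>UNIV. \<Sum>l\<in>UNIV. stoich mu nu i j * (\<kappa>$j * ?P j) * real (mu l j) * (h$l / x$l))"
        by (simp add: sum_component sum_distrib_left sum_distrib_right mult_ac)
      also have "\<dots> = (\<Sum>l\<in>UNIV. \<Sum>j\<in>UNIV. stoich mu nu i j * (\<kappa>$j * ?P j) * real (mu l j) * (h$l / x$l))"
        by (rule sum.swap)
      also have "\<dots> = (\<Sum>l\<in>UNIV. (\<Sum>j\<in>UNIV. stoich mu nu i j * (\<kappa>$j * ?P j) * real (mu l j)) * (1 / x$l) * h$l)"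
        by (intro sum.cong refl) (simp only: sum_distrib_right[symmetric], simp)
      also have "\<dots> = matvec (JJ mu nu (rate mu \<kappa> x) (\<chi> k. 1 / x$k)) h $ i"
        by (simp add: matvec_def JJ_def rate_def mult_ac)
      finally show "(\<Sum>j\<in>UNIV. (\<kappa>$j * (\<Sum>l\<in>UNIV. of_nat (mu l j) * h$l * ?P j / x$l)) *\<^sub>R (\<chi> i. stoich mu nu i j)) $ i
         = matvec (JJ mu nu (rate mu \<kappa> x) (\<chi> k. 1 / x$k)) h $ i" .
    qed
  qed
qed

lemma poly_small_nonzero:
  fixes g :: "real \<Rightarrow> real"
  assumes "real_polynomial_function g" "g 1 \<noteq> 0" "\<delta> > 0"
  shows "\<exists>u. 0 < u \<and> u < \<delta> \<and> g u \<noteq> 0"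
proof -
  obtain c n where g: "g = (\<lambda>x. \<Sum>i\<le>n. c i * x^i)"
    using assms(1) real_polynomial_function_iff_sum by blast
  have "\<exists>i\<le>n. c i \<noteq> 0"
  proof (rule ccontr)
    assume "\<not> (\<exists>i\<le>n. c i \<noteq> 0)"
    then have "g 1 = 0" unfolding g by simp
    then show False using assms(2) by simp
  qed
  then have fin: "finite {x. g x = 0}" unfolding g
    using Transcendental.polyfun_finite_roots by blast
  have "infinite ({0<..<\<delta>} - {x. g x = 0})"
    using assms(3) fin by (intro Diff_infinite_finite) auto
  then obtain u where "u \<in> {0<..<\<delta>} - {x. g x = 0}"
    by (metis ex_in_conv finite.emptyI)
  then show ?thesis by auto
qed

lemma matvec_mult: "matvec A h = (\<chi> i j. A i j) *v h"
  by (simp add: matvec_def matrix_vector_mult_def)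

lemma subspace_S: "subspace (stoich_subspace mu nu)"
proof -
  have "linear (matvec (stoich mu nu))"
    by (rule linearI) (simp_all add: matvec_add matvec_scale)
  then show ?thesis unfolding stoich_subspace_def
    using subspace_UNIV linear_subspace_image by blast
qed

lemma JJ_range: "matvec (JJ mu nu \<alpha> p) h \<in> stoich_subspace mu nu"
proof -
  define w where "w = (\<chi> j. \<alpha>$j * (\<Sum>k\<in>UNIV. real (mu k j) * p$k * h$k))"
  have "matvec (JJ mu nu \<alpha> p) h = matvec (stoich mu nu) w"
  proof (rule iffD2[OF vec_eq_iff], rule allI)
    fix i
    have "matvec (JJ mu nu \<alpha> p) h $ i = (\<Sum>k\<in>UNIV. \<Sum>j\<in>UNIV. stoich mu nu i j * \<alpha>$j * real (mu k j) * p$k * h$k)"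
      by (simp add: matvec_def JJ_def sum_distrib_right)
    also have "\<dots> = (\<Sum>j\<in>UNIV. \<Sum>k\<in>UNIV. stoich mu nu i j * \<alpha>$j * real (mu k j) * p$k * h$k)"
      by (rule sum.swap)
    also have "\<dots> = matvec (stoich mu nu) w $ i"
      by (simp add: matvec_def w_def sum_distrib_left mult_ac)
    finally show "matvec (JJ mu nu \<alpha> p) h $ i = matvec (stoich mu nu) w $ i" .
  qed
  then show ?thesis unfolding stoich_subspace_def by simp
qed

lemma JJ_criterion:
  "(\<lambda>h. matvec (JJ mu nu \<alpha> p) h) ` stoich_subspace mu nu = stoich_subspace mu nu \<longleftrightarrow>
   Esum (dim (stoich_subspace mu nu)) (JJ mu nu \<alpha> p) \<noteq> 0"
proof -
  have r: "\<And>h. (\<chi> i j. JJ mu nu \<alpha> p i j) *v h \<in> stoich_subspace mu nu"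
    using JJ_range[of mu nu \<alpha> p] by (simp add: matvec_mult)
  have "(\<lambda>h. (\<chi> i j. JJ mu nu \<alpha> p i j) *v h) ` stoich_subspace mu nu = stoich_subspace mu nu \<longleftrightarrow>
     Esum (dim (stoich_subspace mu nu)) (\<lambda>i j. (\<chi> i j. JJ mu nu \<alpha> p i j)$i$j) \<noteq> 0"
    by (rule main_LA[OF subspace_S r])
  then show ?thesis by (simp add: matvec_mult)
qed

lemma Jmat_JJ: "Jmat mu nu t l p lam = JJ mu nu (\<chi> j. \<Sum>a<t. lam a * l a $ j) p"
  by (simp add: fun_eq_iff Jmat_def JJ_def)

lemma Bpoly_Esum: "Bpoly mu nu t l p lam = Esum (dim (stoich_subspace mu nu)) (JJ mu nu (\<chi> j. \<Sum>a<t. lam a * l a $ j) p)"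
  by (simp add: Bpoly_def Esum_def Jmat_JJ)

lemma Bpoly_poly:
  "real_polynomial_function (\<lambda>u. Bpoly mu nu t l (\<chi> k. 1 + u * (p0$k - 1)) (\<lambda>a. 1 + u * (lam0 a - 1)))"
  unfolding Bpoly_def principal_minor_def Jmat_def vec_lambda_beta
  by (intro real_polynomial_function_sum real_polynomial_function_prod real_polynomial_function.intros(4)
      real_polynomial_function.intros(3) real_polynomial_function.intros(2)
      real_polynomial_function.intros(1)[OF bounded_linear_ident]) (auto intro: finite_permutations)

lemma rate_pos:
  assumes "positive_vec \<kappa>" "positive_vec x"
  shows "positive_vec (rate mu \<kappa> x)"
  using assms unfolding positive_vec_def rate_def by (auto intro!: mult_pos_pos prod_pos)

lemma nondeg_imp_B:
  fixes mu nu :: "'s::finite \<Rightarrow> 'r::finite \<Rightarrow> nat"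
  assumes L: "extreme_rays_list (flux_cone (stoich mu nu)) t l"
    and ND: "network_nondegenerate mu nu"
  shows "\<exists>p lam. Bpoly mu nu t l p lam \<noteq> 0"
proof -
  obtain \<kappa> x where k: "positive_vec \<kappa>" and ss: "positive_steady_state mu nu \<kappa> x"
    and nd: "\<not> degenerate_ss mu nu \<kappa> x"
    using ND unfolding network_nondegenerate_def by blast
  have xpos: "positive_vec x" and ma: "mass_action mu nu \<kappa> x = 0"
    using ss unfolding positive_steady_state_def by auto
  define v where "v = rate mu \<kappa> x"
  have vpos: "positive_vec v" unfolding v_def using rate_pos[OF k xpos] .
  have "v \<in> flux_cone (stoich mu nu)"
    using vpos ma unfolding flux_cone_def positive_vec_def mass_action_def v_def
    by (auto intro: less_imp_le)
  then obtain c where c: "\<forall>a<t. c a \<ge> 0" "v = (\<Sum>a<t. c a *\<^sub>R l a)"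
    using flux_decomp[OF L] by blast
  have vc: "(\<chi> j. \<Sum>a<t. c a * l a $ j) = v"
    unfolding c(2) by (simp add: vec_eq_iff sum_component)
  have xk: "\<And>k. x$k > 0" using xpos unfolding positive_vec_def by auto
  have D: "frechet_derivative (mass_action mu nu \<kappa>) (at x) = (\<lambda>h. matvec (JJ mu nu v (\<chi> k. 1 / x$k)) h)"
    unfolding v_def by (rule frechet_derivative_at[OF mass_action_has_derivative[OF xk], symmetric])
  have "(\<lambda>h. matvec (JJ mu nu v (\<chi> k. 1 / x$k)) h) ` stoich_subspace mu nu = stoich_subspace mu nu"
    using nd unfolding degenerate_ss_def D by simp
  then have "Esum (dim (stoich_subspace mu nu)) (JJ mu nu v (\<chi> k. 1 / x$k)) \<noteq> 0"
    using JJ_criterion by blast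
  then have "Bpoly mu nu t l (\<chi> k. 1 / x$k) c \<noteq> 0"
    unfolding Bpoly_Esum vc .
  then show ?thesis by blast
qed

lemma B_imp_nondeg:
  fixes mu nu :: "'s::finite \<Rightarrow> 'r::finite \<Rightarrow> nat"
  assumes L: "extreme_rays_list (flux_cone (stoich mu nu)) t l"
    and A0: "positive_vec \<alpha>0" "matvec (stoich mu nu) \<alpha>0 = 0"
    and B: "Bpoly mu nu t l p0 lam0 \<noteq> 0"
  shows "network_nondegenerate mu nu"
proof -
  let ?C = "flux_cone (stoich mu nu)"
  have lC: "l a \<in> ?C" if "a < t" for a
    using L that unfolding extreme_rays_list_def extreme_ray_def by auto
  have lnn: "l a $ j \<ge> 0" if "a < t" for a j
    using lC[OF that] unfolding flux_cone_def by auto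
  have "\<alpha>0 \<in> ?C" using A0 unfolding flux_cone_def positive_vec_def by (auto intro: less_imp_le)
  then obtain c0 where c0: "\<forall>a<t. c0 a \<ge> 0" "\<alpha>0 = (\<Sum>a<t. c0 a *\<^sub>R l a)"
    using flux_decomp[OF L] by blast
  have cover: "\<exists>a<t. l a $ j > 0" for j
  proof (rule ccontr)
    assume "\<not> (\<exists>a<t. l a $ j > 0)"
    then have "\<forall>a<t. l a $ j = 0" using lnn by (metis order.order_iff_strict)
    then have "\<alpha>0 $ j = 0" unfolding c0(2) by (simp add: sum_component)
    then show False using A0(1) unfolding positive_vec_def by (metis less_irrefl)
  qed
  define g where "g = (\<lambda>u. Bpoly mu nu t l (\<chi> k. 1 + u * (p0$k - 1)) (\<lambda>a. 1 + u * (lam0 a - 1)))"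
  have g1: "g 1 = Bpoly mu nu t l p0 lam0"
  proof -
    have "(\<chi> k. 1 + 1 * (p0$k - 1)) = p0" by (simp add: vec_eq_iff)
    moreover have "(\<lambda>a. 1 + 1 * (lam0 a - 1)) = lam0" by (simp add: fun_eq_iff)
    ultimately show ?thesis unfolding g_def by simp
  qed
  define Bd where "Bd = 1 + (\<Sum>k\<in>UNIV. \<bar>p0$k - 1\<bar>) + (\<Sum>a<t. \<bar>lam0 a - 1\<bar>)"
  have Bd1: "Bd \<ge> 1" unfolding Bd_def by (simp add: sum_nonneg add_nonneg_nonneg)
  obtain u where u: "0 < u" "u < 1 / Bd" "g u \<noteq> 0"
    using poly_small_nonzero[of g "1 / Bd"] Bpoly_poly[of mu nu t l p0 lam0] B g1 Bd1
    unfolding g_def by auto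
  have uB: "u * Bd < 1" using u(2) Bd1 by (simp add: field_simps)
  have small: "1 + u * d > 0" if "\<bar>d\<bar> \<le> Bd" for d
  proof -
    have "u * \<bar>d\<bar> \<le> u * Bd" using that u(1) by (simp add: mult_left_mono)
    moreover have "u * (- \<bar>d\<bar>) \<le> u * d" using u(1) by (intro mult_left_mono) auto
    ultimately show ?thesis using uB by (simp add: algebra_simps)
  qed
  define p where "p = (\<chi> k. 1 + u * (p0$k - 1))"
  define lam where "lam = (\<lambda>a. 1 + u * (lam0 a - 1))"
  have ppos: "p$k > 0" for k
  proof -
    have "\<bar>p0$k - 1\<bar> \<le> (\<Sum>k\<in>UNIV. \<bar>p0$k - 1\<bar>)" by (rule member_le_sum) auto
    then have "\<bar>p0$k - 1\<bar> \<le> Bd" unfolding Bd_def by (smt (verit) sum_nonneg abs_ge_zero)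
    then show ?thesis unfolding p_def using small by simp
  qed
  have lampos: "lam a > 0" if "a < t" for a
  proof -
    have "\<bar>lam0 a - 1\<bar> \<le> (\<Sum>a<t. \<bar>lam0 a - 1\<bar>)" using that by (intro member_le_sum) auto
    then have "\<bar>lam0 a - 1\<bar> \<le> Bd" unfolding Bd_def
      by (smt (verit) sum_nonneg abs_ge_zero)
    then show ?thesis unfolding lam_def using small by simp
  qed
  have gB: "Bpoly mu nu t l p lam \<noteq> 0" using u(3) unfolding g_def p_def lam_def .
  define \<alpha> where "\<alpha> = (\<chi> j. \<Sum>a<t. lam a * l a $ j)"
  have apos: "\<alpha>$j > 0" for j
  proof -
    obtain a where a: "a < t" "l a $ j > 0" using cover by blast
    have "lam a * l a $ j \<le> (\<Sum>a<t. lam a * l a $ j)"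
      using a lampos lnn by (intro member_le_sum) (auto intro: mult_nonneg_nonneg less_imp_le)
    moreover have "lam a * l a $ j > 0" using a lampos by simp
    ultimately show ?thesis unfolding \<alpha>_def by simp
  qed
  have aker: "matvec (stoich mu nu) \<alpha> = 0"
  proof -
    have "\<alpha> = (\<Sum>a<t. lam a *\<^sub>R l a)" unfolding \<alpha>_def by (simp add: vec_eq_iff sum_component)
    then have "matvec (stoich mu nu) \<alpha> = (\<Sum>a<t. lam a *\<^sub>R matvec (stoich mu nu) (l a))"
      by (simp add: matvec_sum matvec_scale)
    also have "\<dots> = 0" using lC unfolding flux_cone_def by (intro sum.neutral) auto
    finally show ?thesis .
  qed
  define x where "x = (\<chi> k. 1 / p$k)"
  have xpos: "x$k > 0" for k unfolding x_def using ppos by simp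
  define \<kappa> where "\<kappa> = (\<chi> j. \<alpha>$j / (\<Prod>l\<in>UNIV. (x$l)^(mu l j)))"
  have Ppos: "(\<Prod>l\<in>UNIV. (x$l)^(mu l j)) > 0" for j using xpos by (intro prod_pos) simp
  have kpos: "positive_vec \<kappa>" unfolding positive_vec_def \<kappa>_def using apos Ppos by simp
  have rate: "rate mu \<kappa> x = \<alpha>"
  proof -
    have "\<kappa>$j * (\<Prod>l\<in>UNIV. (x$l)^(mu l j)) = \<alpha>$j" for j
      using Ppos[of j] unfolding \<kappa>_def by (simp del: prod_pos_nat_iff prod_zero_iff)
    then show ?thesis unfolding rate_def by (simp add: vec_eq_iff)
  qed
  have ss: "positive_steady_state mu nu \<kappa> x"
    unfolding positive_steady_state_def positive_vec_def mass_action_def rate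
    using xpos aker by simp
  have px: "(\<chi> k. 1 / x$k) = p" unfolding x_def by (simp add: vec_eq_iff)
  have D: "frechet_derivative (mass_action mu nu \<kappa>) (at x) = (\<lambda>h. matvec (JJ mu nu \<alpha> p) h)"
    using frechet_derivative_at[OF mass_action_has_derivative[OF xpos, of mu nu \<kappa>], symmetric] unfolding rate px .
  have "Esum (dim (stoich_subspace mu nu)) (JJ mu nu \<alpha> p) \<noteq> 0"
    using gB unfolding Bpoly_Esum \<alpha>_def .
  then have "\<not> degenerate_ss mu nu \<kappa> x"
    unfolding degenerate_ss_def D using JJ_criterion by blast
  then show ?thesis unfolding network_nondegenerate_def using kpos ss by blast
qed

theorem theorem1:
  fixes mu nu :: "'s::finite \<Rightarrow> 'r::finite \<Rightarrow> nat"
  assumes distinct_sides: "\<forall>j. (\<lambda>i. mu i j) \<noteq> (\<lambda>i. nu i j)"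
  shows "((\<nexists>\<alpha>. positive_vec \<alpha> \<and> matvec (stoich mu nu) \<alpha> = 0) \<longrightarrow>
           (\<nexists>\<kappa> x. positive_vec \<kappa> \<and> positive_steady_state mu nu \<kappa> x))
       \<and> (\<forall>t l. (\<exists>\<alpha>. positive_vec \<alpha> \<and> matvec (stoich mu nu) \<alpha> = 0) \<and>
                extreme_rays_list (flux_cone (stoich mu nu)) t l \<longrightarrow>
            (network_degenerate mu nu \<longleftrightarrow> (\<forall>p lam. Bpoly mu nu t l p lam = 0)) \<and>
            (network_nondegenerate mu nu \<longleftrightarrow> (\<exists>p lam. Bpoly mu nu t l p lam \<noteq> 0)))"
proof (intro conjI impI allI)
  assume no: "\<nexists>\<alpha>. positive_vec \<alpha> \<and> matvec (stoich mu nu) \<alpha> = 0"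
  show "\<nexists>\<kappa> x. positive_vec \<kappa> \<and> positive_steady_state mu nu \<kappa> x"
  proof
    assume "\<exists>\<kappa> x. positive_vec \<kappa> \<and> positive_steady_state mu nu \<kappa> x"
    then obtain \<kappa> x where "positive_vec \<kappa>" "positive_vec x" "mass_action mu nu \<kappa> x = 0"
      unfolding positive_steady_state_def by blast
    then have "positive_vec (rate mu \<kappa> x) \<and> matvec (stoich mu nu) (rate mu \<kappa> x) = 0"
      using rate_pos unfolding mass_action_def by blast
    then show False using no by blast
  qed
next
  fix t l
  assume H: "(\<exists>\<alpha>. positive_vec \<alpha> \<and> matvec (stoich mu nu) \<alpha> = 0) \<and>
                extreme_rays_list (flux_cone (stoich mu nu)) t l"
  then obtain \<alpha>0 where A0: "positive_vec \<alpha>0" "matvec (stoich mu nu) \<alpha>0 = 0" by blast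
  have L: "extreme_rays_list (flux_cone (stoich mu nu)) t l" using H by blast
  have eq: "network_nondegenerate mu nu \<longleftrightarrow> (\<exists>p lam. Bpoly mu nu t l p lam \<noteq> 0)"
    using nondeg_imp_B[OF L] B_imp_nondeg[OF L A0] by blast
  have "network_nondegenerate mu nu \<longleftrightarrow> \<not> network_degenerate mu nu"
    unfolding network_nondegenerate_def network_degenerate_def by blast
  then show "network_degenerate mu nu \<longleftrightarrow> (\<forall>p lam. Bpoly mu nu t l p lam = 0)"
    using eq by blast
  show "network_nondegenerate mu nu \<longleftrightarrow> (\<exists>p lam. Bpoly mu nu t l p lam \<noteq> 0)" by (rule eq)
qed

end
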